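(* Let $\Omega\subset\mathbb{R}^N$ be a uniformly smooth domain with outer unit normal $\nu$. Let $v_1\in W^{1,\infty}(\Omega\times\mathbb{R})$ and $v_2\in C^1(\overline\Omega\times\mathbb{R})$ satisfy: $v_1\le v_2$ on $\partial\Omega\times\mathbb{R}$; the spatial gradient $\nabla v_2$ is uniformly continuous on $\overline\Omega\times\mathbb{R}$; $$\sup_{\partial\Omega\times\mathbb{R}}\big(v_1-v_2+\min(\partial_\nu v_2,0)\big)<0;$$ and for every $\varepsilon>0$, $\inf\{v_2(x,t):\ \mathrm{dist}(x,\mathbb{R}^N\setminus\Omega)>\varepsilon,\ t\in\mathbb{R}\}>0$. Then there is a constant $k>0$ such that $kv_2\ge v_1$ in $\Omega\times\mathbb{R}$.
   Context: $\partial_\nu v_2=\nu\cdot\nabla v_2$ denotes the outer normal derivative on $\partial\Omega$. *)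

theory Defs
  imports "HOL-Analysis.Analysis"
begin

definition hproj :: "'a::euclidean_space \<Rightarrow> 'a \<Rightarrow> 'a" where
  "hproj e w = w - (w \<bullet> e) *\<^sub>R e"

definition unif_smooth_domain :: "'a::euclidean_space set \<Rightarrow> bool" where
  "unif_smooth_domain \<Omega> \<longleftrightarrow> open \<Omega> \<and> connected \<Omega> \<and> \<Omega> \<noteq> {} \<and>
    (\<exists>r>0. \<exists>M. \<forall>z\<in>frontier \<Omega>. \<exists>e \<phi> g H.
       norm e = 1 \<and> \<phi> 0 = 0 \<and>
       (\<forall>w. (\<phi> has_derivative (\<lambda>h. g w \<bullet> h)) (at w)) \<and>
       (\<forall>w. (g has_derivative H w) (at w)) \<and>
       (\<forall>v. continuous_on UNIV (\<lambda>w. H w v)) \<and>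
       (\<forall>w. norm (g w) \<le> M \<and> onorm (H w) \<le> M) \<and>
       (\<forall>y\<in>ball z r. y \<in> \<Omega> \<longleftrightarrow> \<phi> (hproj e (y - z)) < (y - z) \<bullet> e))"

text \<open>nu is the outer unit normal field of Omega: at each boundary point z, nu z is a unit vector
  and Omega is asymptotically the half-space {y. (y - z) . nu z < 0} near z.\<close>
definition outer_unit_normal :: "'a::euclidean_space set \<Rightarrow> ('a \<Rightarrow> 'a) \<Rightarrow> bool" where
  "outer_unit_normal \<Omega> \<nu> \<longleftrightarrow> (\<forall>z\<in>frontier \<Omega>. norm (\<nu> z) = 1 \<and>
     (\<forall>\<epsilon>>0. \<exists>\<delta>>0. \<forall>y\<in>ball z \<delta>.
        (y \<in> \<Omega> \<longrightarrow> (y - z) \<bullet> \<nu> z \<le> \<epsilon> * norm (y - z)) \<and>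
        (y \<notin> \<Omega> \<longrightarrow> - \<epsilon> * norm (y - z) \<le> (y - z) \<bullet> \<nu> z)))"

text \<open>W^{1,infinity}(Omega x R), via its Lipschitz representative: bounded on Omega x R and
  Lipschitz along every segment contained in Omega x R (i.e. bounded with bounded gradient).\<close>
definition W1inf :: "('a::euclidean_space \<Rightarrow> real \<Rightarrow> real) \<Rightarrow> 'a set \<Rightarrow> bool" where
  "W1inf v \<Omega> \<longleftrightarrow> (\<exists>B. \<forall>x\<in>\<Omega>. \<forall>t. \<bar>v x t\<bar> \<le> B) \<and>
     (\<exists>L. \<forall>p q. closed_segment p q \<subseteq> \<Omega> \<times> UNIV \<longrightarrow>
        \<bar>v (fst p) (snd p) - v (fst q) (snd q)\<bar> \<le> L * dist p q)"

end

theory Submission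
  imports Defs
begin


lemma g_lip:
  fixes g :: "'a::euclidean_space \<Rightarrow> 'a"
  assumes "\<forall>w. (g has_derivative H w) (at w)" "\<forall>w. onorm (H w) \<le> M"
  shows "norm (g a - g b) \<le> M * norm (a - b)"
  by (rule differentiable_bound[of UNIV]) (use assms in \<open>auto intro: has_derivative_at_withinI\<close>)

lemma taylor_phi:
  fixes g :: "'a::euclidean_space \<Rightarrow> 'a" and \<phi> :: "'a \<Rightarrow> real"
  assumes d1: "\<forall>w. (\<phi> has_derivative (\<lambda>h. g w \<bullet> h)) (at w)"
    and d2: "\<forall>w. (g has_derivative H w) (at w)" and b: "\<forall>w. onorm (H w) \<le> M"
  shows "\<phi> p \<le> \<phi> 0 + g 0 \<bullet> p + M * (norm p)^2"
proof -
  define \<psi> where "\<psi> q = \<phi> q - g 0 \<bullet> q" for q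
  have M0: "0 \<le> M" using b onorm_pos_le d2 has_derivative_bounded_linear by (meson order_trans)
  have der: "(\<psi> has_derivative (\<lambda>h. (g q - g 0) \<bullet> h)) (at q within cball 0 (norm p))" for q
  proof -
    have "(\<psi> has_derivative (\<lambda>h. g q \<bullet> h - g 0 \<bullet> h)) (at q)"
      unfolding \<psi>_def using d1
      by (auto intro!: derivative_eq_intros)
    then show ?thesis by (simp add: inner_diff_left has_derivative_at_withinI)
  qed
  have bd: "onorm (\<lambda>h. (g q - g 0) \<bullet> h) \<le> M * norm p" if "q \<in> cball 0 (norm p)" for q
  proof -
    have "onorm (\<lambda>h. (g q - g 0) \<bullet> h) \<le> norm (g q - g 0)"
      using onorm_inner_right[of "\<lambda>x. x" "g q - g 0"] by (simp add: onorm_id bounded_linear_ident)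
    also have "\<dots> \<le> M * norm (q - 0)" using g_lip[OF d2 b] by blast
    also have "\<dots> \<le> M * norm p" using that M0 by (auto intro: mult_left_mono)
    finally show ?thesis .
  qed
  have "norm (\<psi> p - \<psi> 0) \<le> M * norm p * norm (p - 0)"
    by (rule differentiable_bound[OF convex_cball der bd]) auto
  then show ?thesis unfolding \<psi>_def by (simp add: power2_eq_square abs_le_iff mult.assoc)
qed


lemma hproj_scale: "hproj e (s *\<^sub>R u) = s *\<^sub>R hproj e u"
  unfolding hproj_def by (simp add: scaleR_diff_right)

lemma hproj_norm_le:
  assumes "norm e = 1" shows "norm (hproj e u) \<le> norm u"
proof -
  have ee: "e \<bullet> e = 1" using assms by (simp add: norm_eq_1)
  have "hproj e u \<bullet> hproj e u = u \<bullet> u - (u \<bullet> e) * (u \<bullet> e)"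
    unfolding hproj_def inner_diff_left inner_diff_right inner_scaleR_left inner_scaleR_right ee
      inner_commute[of e u] by (simp add: algebra_simps)
  then have "hproj e u \<bullet> hproj e u \<le> u \<bullet> u" using zero_le_square[of "u \<bullet> e"] by linarith
  then have "(norm (hproj e u))^2 \<le> (norm u)^2" by (simp only: power2_norm_eq_inner)
  then show ?thesis by (rule power2_le_imp_le) simp
qed

lemma hproj_inner: "hproj e a \<bullet> b = a \<bullet> hproj e b"
  unfolding hproj_def inner_diff_left inner_diff_right inner_scaleR_left inner_scaleR_right
    inner_commute[of e b] by (simp add: algebra_simps)

lemma inward_chart:
  fixes z u e :: "'a::euclidean_space" and \<phi> :: "'a \<Rightarrow> real"
  assumes e: "norm e = 1" and phi0: "\<phi> 0 = 0"
    and d1: "\<forall>w. (\<phi> has_derivative (\<lambda>h. g w \<bullet> h)) (at w)"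
    and d2: "\<forall>w. (g has_derivative H w) (at w)"
    and b: "\<forall>w. norm (g w) \<le> M \<and> onorm (H w) \<le> M"
    and bl: "\<forall>y\<in>ball z r. y \<in> \<Omega> \<longleftrightarrow> \<phi> (hproj e (y - z)) < (y - z) \<bullet> e"
    and u: "norm u = 1" and s: "0 < s" "s < r" "M * s < - ((hproj e (g 0) - e) \<bullet> u)"
  shows "z + s *\<^sub>R u \<in> \<Omega>"
proof -
  have "norm (g 0) \<le> M" using b by blast
  then have M0: "0 \<le> M" using norm_ge_zero[of "g 0"] by linarith
  let ?p = "hproj e (s *\<^sub>R u)"
  have hp: "?p = s *\<^sub>R hproj e u" by (rule hproj_scale)
  have nhp: "norm ?p \<le> s" using hproj_norm_le[OF e, of u] u s(1) hp by simp
  have tay: "\<phi> ?p \<le> g 0 \<bullet> ?p + M * (norm ?p)^2"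
    using taylor_phi[OF d1 d2, of M ?p] b phi0 by auto
  have sq: "M * (norm ?p)^2 \<le> M * s^2"
    using nhp M0 by (simp add: mult_left_mono power_mono)
  have gp: "g 0 \<bullet> ?p = s * (hproj e (g 0) \<bullet> u)"
    using hp hproj_inner[of e "g 0" u] by simp
  have key: "s * ((hproj e (g 0) - e) \<bullet> u) + M * s^2 < 0"
  proof -
    have "M * s * s < - ((hproj e (g 0) - e) \<bullet> u) * s" using s by (intro mult_strict_right_mono) auto
    then show ?thesis by (simp add: power2_eq_square algebra_simps)
  qed
  have "\<phi> ?p < (s *\<^sub>R u) \<bullet> e"
    using tay sq gp key by (simp add: inner_diff_left inner_commute algebra_simps)
  moreover have "z + s *\<^sub>R u \<in> ball z r" using u s by (simp add: dist_norm)
  ultimately show ?thesis using bl by auto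
qed

lemma asym:
  assumes normal: "outer_unit_normal \<Omega> \<nu>" and z: "z \<in> frontier \<Omega>"
    and S: "0 < S" "\<forall>s. 0 < s \<and> s < S \<longrightarrow> z + s *\<^sub>R v \<in> \<Omega>"
  shows "v \<bullet> \<nu> z \<le> 0"
proof (rule field_le_epsilon)
  fix \<epsilon> :: real assume ep: "0 < \<epsilon>"
  define \<epsilon>' where "\<epsilon>' = \<epsilon> / (norm v + 1)"
  have nv1: "0 < norm v + 1" using norm_ge_zero[of v] by linarith
  have ep': "0 < \<epsilon>'" using ep nv1 unfolding \<epsilon>'_def by (rule divide_pos_pos)
  obtain \<delta> where d: "\<delta> > 0" and Hd: "\<forall>y\<in>ball z \<delta>. (y \<in> \<Omega> \<longrightarrow> (y - z) \<bullet> \<nu> z \<le> \<epsilon>' * norm (y - z))"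
    using normal z ep' unfolding outer_unit_normal_def by blast
  define s where "s = min S (\<delta> / (norm v + 1)) / 2"
  have s0: "0 < s" using S d nv1 by (simp add: s_def)
  have sS: "s < S" using S d s0 by (auto simp: s_def)
  have "s * (norm v + 1) < \<delta>"
  proof -
    have a: "\<delta> / (norm v + 1) > 0" using d nv1 by (rule divide_pos_pos)
    have "s \<le> \<delta> / (norm v + 1) / 2" unfolding s_def by (intro divide_right_mono) auto
    moreover have "\<And>X. s \<le> X / 2 \<Longrightarrow> 0 < X \<Longrightarrow> s < X" by linarith
    ultimately have "s < \<delta> / (norm v + 1)" using a by blast
    then show ?thesis using nv1 by (simp add: pos_less_divide_eq)
  qed
  then have snv: "s * norm v < \<delta>" using s0 by (simp add: algebra_simps)
  have yin: "z + s *\<^sub>R v \<in> \<Omega>" using S(2) s0 sS by blast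
  have "z + s *\<^sub>R v \<in> ball z \<delta>" using snv s0 by (simp add: dist_norm)
  then have "(s *\<^sub>R v) \<bullet> \<nu> z \<le> \<epsilon>' * norm (s *\<^sub>R v)" using Hd yin by fastforce
  then have "s * (v \<bullet> \<nu> z) \<le> s * (\<epsilon>' * norm v)" using s0 by (simp add: algebra_simps)
  then have "v \<bullet> \<nu> z \<le> \<epsilon>' * norm v" using s0 by simp
  also have "\<dots> \<le> \<epsilon>"
  proof -
    have "\<epsilon>' * norm v = \<epsilon> * (norm v / (norm v + 1))" by (simp add: \<epsilon>'_def)
    also have "\<dots> \<le> \<epsilon> * 1" using ep nv1 by (intro mult_left_mono) (auto simp: divide_le_eq)
    finally show ?thesis by simp
  qed
  finally show "v \<bullet> \<nu> z \<le> 0 + \<epsilon>" by simp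
qed

lemma polar:
  fixes \<nu> m :: "'a::euclidean_space"
  assumes n1: "norm \<nu> = 1" and m0: "m \<noteq> 0" and H: "\<forall>u. u \<bullet> m < 0 \<longrightarrow> u \<bullet> \<nu> \<le> 0"
  shows "\<nu> = (1 / norm m) *\<^sub>R m"
proof -
  define lam where "lam = (\<nu> \<bullet> m) / (m \<bullet> m)"
  define q where "q = \<nu> - lam *\<^sub>R m"
  have mm: "m \<bullet> m > 0" using m0 by simp
  have qm: "q \<bullet> m = 0" using mm by (simp add: q_def lam_def inner_diff_left)
  have nq: "\<nu> = q + lam *\<^sub>R m" by (simp add: q_def)
  have qn: "q \<bullet> \<nu> = q \<bullet> q" by (subst nq) (simp add: inner_add_right qm)
  have mn: "0 \<le> m \<bullet> \<nu>" using H[rule_format, of "- m"] mm by simp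
  have qt: "q \<bullet> q \<le> \<tau> * (m \<bullet> \<nu>)" if t: "\<tau> > 0" for \<tau>
  proof -
    have "(q - \<tau> *\<^sub>R m) \<bullet> m < 0" using qm mm t by (simp add: inner_diff_left)
    then have "(q - \<tau> *\<^sub>R m) \<bullet> \<nu> \<le> 0" using H by blast
    then show ?thesis using qn by (simp add: inner_diff_left)
  qed
  have "q \<bullet> q \<le> 0"
  proof (rule field_le_epsilon)
    fix e :: real assume e: "0 < e"
    have "0 < m \<bullet> \<nu> + 1" using mn by linarith
    then have "0 < e / (m \<bullet> \<nu> + 1)" using e by (rule divide_pos_pos[rotated])
    then have "q \<bullet> q \<le> (e / (m \<bullet> \<nu> + 1)) * (m \<bullet> \<nu>)" by (rule qt)
    also have "\<dots> = e * ((m \<bullet> \<nu>) / (m \<bullet> \<nu> + 1))" by simp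
    also have "\<dots> \<le> e * 1" using e mn by (intro mult_left_mono) auto
    finally show "q \<bullet> q \<le> 0 + e" by simp
  qed
  then have q0: "q = 0" by (metis order.antisym inner_ge_zero inner_eq_zero_iff)
  then have nu: "\<nu> = lam *\<^sub>R m" by (simp add: q_def)
  have l0: "0 \<le> lam" using mn mm by (simp add: lam_def inner_commute)
  have "lam * norm m = 1" using n1 nu l0 by simp
  then have "lam = 1 / norm m" using m0 by (simp add: field_simps)
  then show ?thesis using nu by simp
qed



lemma inward_normal:
  assumes dom: "unif_smooth_domain \<Omega>" and normal: "outer_unit_normal \<Omega> \<nu>"
  shows "\<exists>R>0. \<forall>z\<in>frontier \<Omega>. \<forall>s. 0 < s \<and> s \<le> R \<longrightarrow> z - s *\<^sub>R \<nu> z \<in> \<Omega>"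
proof -
  obtain r M where r: "r > 0" and HH: "\<forall>z\<in>frontier \<Omega>. \<exists>e \<phi> g H.
       norm e = 1 \<and> \<phi> 0 = 0 \<and>
       (\<forall>w. (\<phi> has_derivative (\<lambda>h. g w \<bullet> h)) (at w)) \<and>
       (\<forall>w. (g has_derivative H w) (at w)) \<and>
       (\<forall>v. continuous_on UNIV (\<lambda>w. H w v)) \<and>
       (\<forall>w. norm (g w) \<le> M \<and> onorm (H w) \<le> M) \<and>
       (\<forall>y\<in>ball z r. y \<in> \<Omega> \<longleftrightarrow> \<phi> (hproj e (y - z)) < (y - z) \<bullet> e)"
    using dom unfolding unif_smooth_domain_def by blast
  define R where "R = min r (1 / (\<bar>M\<bar> + 1)) / 2"
  have Mp: "0 < \<bar>M\<bar> + 1" using abs_ge_zero[of M] by linarith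
  have R0: "0 < R" using r Mp by (simp add: R_def)
  have "\<forall>z\<in>frontier \<Omega>. \<forall>s. 0 < s \<and> s \<le> R \<longrightarrow> z - s *\<^sub>R \<nu> z \<in> \<Omega>"
  proof (intro ballI allI impI)
    fix z s assume z: "z \<in> frontier \<Omega>" and s: "0 < s \<and> s \<le> R"
    obtain e \<phi> g H where e: "norm e = 1" and p0: "\<phi> 0 = 0"
      and d1: "\<forall>w. (\<phi> has_derivative (\<lambda>h. g w \<bullet> h)) (at w)"
      and d2: "\<forall>w. (g has_derivative H w) (at w)"
      and b: "\<forall>w. norm (g w) \<le> M \<and> onorm (H w) \<le> M"
      and bl: "\<forall>y\<in>ball z r. y \<in> \<Omega> \<longleftrightarrow> \<phi> (hproj e (y - z)) < (y - z) \<bullet> e"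
      using HH z by blast
    define n where "n = hproj e (g 0) - e"
    have ee: "e \<bullet> e = 1" using e by (simp add: norm_eq_1)
    have ne: "n \<bullet> e = -1" using ee by (simp add: n_def hproj_def inner_diff_left)
    have n1: "1 \<le> norm n" using Cauchy_Schwarz_ineq2[of n e] ne e by simp
    have pol: "\<forall>u. u \<bullet> n < 0 \<longrightarrow> u \<bullet> \<nu> z \<le> 0"
    proof (intro allI impI)
      fix u assume un: "u \<bullet> n < 0"
      then have u0: "u \<noteq> 0" by auto
      then have nup: "0 < norm u" by simp
      define u' where "u' = (1 / norm u) *\<^sub>R u"
      have nu': "norm u' = 1" using u0 by (simp add: u'_def)
      have "n \<bullet> u' = (u \<bullet> n) / norm u" by (simp add: u'_def inner_commute)
      then have un': "n \<bullet> u' < 0" using un nup by (simp add: divide_neg_pos)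
      define c where "c = - (n \<bullet> u')"
      have c0: "0 < c" using un' by (simp add: c_def)
      define S where "S = min r (c / (\<bar>M\<bar> + 1))"
      have "0 < c / (\<bar>M\<bar> + 1)" using c0 Mp by (rule divide_pos_pos)
      then have S0: "0 < S" using r by (simp add: S_def)
      have "\<forall>\<sigma>. 0 < \<sigma> \<and> \<sigma> < S \<longrightarrow> z + \<sigma> *\<^sub>R u' \<in> \<Omega>"
      proof (intro allI impI)
        fix \<sigma> assume \<sigma>: "0 < \<sigma> \<and> \<sigma> < S"
        have "\<sigma> < c / (\<bar>M\<bar> + 1)" using \<sigma> by (simp add: S_def)
        then have a: "\<sigma> * (\<bar>M\<bar> + 1) < c" using Mp by (simp add: pos_less_divide_eq)
        have m1: "M * \<sigma> \<le> \<bar>M\<bar> * \<sigma>" using \<sigma> by (intro mult_right_mono) auto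
        have a': "\<bar>M\<bar> * \<sigma> + \<sigma> < c" using a by (simp add: algebra_simps)
        have "M * \<sigma> < c" using m1 a' \<sigma> by linarith
        moreover have "- ((hproj e (g 0) - e) \<bullet> u') = c" by (simp add: c_def n_def)
        ultimately have "M * \<sigma> < - ((hproj e (g 0) - e) \<bullet> u')" by simp
        moreover have "\<sigma> < r" using \<sigma> by (simp add: S_def)
        ultimately show "z + \<sigma> *\<^sub>R u' \<in> \<Omega>"
          using inward_chart[OF e p0 d1 d2 b bl nu'] \<sigma> by blast
      qed
      then have "u' \<bullet> \<nu> z \<le> 0" using asym[OF normal z S0] by blast
      moreover have "u \<bullet> \<nu> z = norm u * (u' \<bullet> \<nu> z)" using u0 by (simp add: u'_def)
      ultimately show "u \<bullet> \<nu> z \<le> 0" using nup by (simp add: mult_nonneg_nonpos)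
    qed
    have nz: "norm (\<nu> z) = 1" using normal z unfolding outer_unit_normal_def by blast
    have n0: "n \<noteq> 0" using n1 by auto
    have nuv: "\<nu> z = (1 / norm n) *\<^sub>R n" by (rule polar[OF nz n0 pol])
    have nn: "n \<bullet> n = (norm n)^2" by (simp add: power2_norm_eq_inner)
    have nnu: "n \<bullet> \<nu> z = norm n" using n0 by (simp add: nuv nn power2_eq_square)
    have R2: "R \<le> (1 / (\<bar>M\<bar> + 1)) / 2" unfolding R_def by (intro divide_right_mono) auto
    have "\<And>X. s \<le> R \<Longrightarrow> R \<le> X / 2 \<Longrightarrow> 2 * s \<le> X" by linarith
    then have sR: "2 * s \<le> 1 / (\<bar>M\<bar> + 1)" using s R2 by blast
    have k0: "2 * s * (\<bar>M\<bar> + 1) \<le> 1" using sR Mp by (simp add: pos_le_divide_eq)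
    have k1: "\<bar>M\<bar> * s * 2 + s * 2 \<le> 1" using k0 by (simp add: algebra_simps)
    have m1: "M * s \<le> \<bar>M\<bar> * s" using s by (intro mult_right_mono) auto
    have Ms1: "M * s < 1" using k1 m1 s by linarith
    have "(hproj e (g 0) - e) \<bullet> - \<nu> z = - (n \<bullet> \<nu> z)" unfolding n_def by (rule inner_minus_right)
    then have eqn: "- ((hproj e (g 0) - e) \<bullet> - \<nu> z) = norm n" using nnu by simp
    have Ms: "M * s < - ((hproj e (g 0) - e) \<bullet> - \<nu> z)" using Ms1 n1 eqn by linarith
    have sr: "s < r" using s r by (simp add: R_def)
    have "z + s *\<^sub>R (- \<nu> z) \<in> \<Omega>"
      by (rule inward_chart[OF e p0 d1 d2 b bl]) (use nz s sr Ms in auto)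
    then show "z - s *\<^sub>R \<nu> z \<in> \<Omega>" by simp
  qed
  with R0 show ?thesis by blast
qed

lemma sq_expand:
  fixes w v :: "'a::real_inner"
  shows "(w + s *\<^sub>R v) \<bullet> (w + s *\<^sub>R v) = w \<bullet> w + s * (2 * (v \<bullet> w)) + s * (s * (v \<bullet> v))"
  unfolding inner_add_left inner_add_right inner_scaleR_left inner_scaleR_right inner_commute[of w v]
  by (simp add: algebra_simps)

lemma nearest_normal:
  fixes x z :: "'a::euclidean_space"
  assumes normal: "outer_unit_normal \<Omega> \<nu>" and z: "z \<in> frontier \<Omega>" and d: "0 < dist x z"
    and bl: "ball x (dist x z) \<subseteq> \<Omega>"
  shows "\<nu> z = (1 / dist x z) *\<^sub>R (z - x)"
proof -
  have "\<forall>v. v \<bullet> (z - x) < 0 \<longrightarrow> v \<bullet> \<nu> z \<le> 0"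
  proof (intro allI impI)
    fix v assume v: "v \<bullet> (z - x) < 0"
    then have v0: "v \<noteq> 0" by auto
    then have vv: "0 < v \<bullet> v" by simp
    define c where "c = - (v \<bullet> (z - x))"
    have c0: "0 < c" using v by (simp add: c_def)
    define S where "S = 2 * c / (v \<bullet> v)"
    have S0: "0 < S" using c0 vv by (simp add: S_def)
    have "\<forall>s. 0 < s \<and> s < S \<longrightarrow> z + s *\<^sub>R v \<in> \<Omega>"
    proof (intro allI impI)
      fix s assume s: "0 < s \<and> s < S"
      then have "s * (v \<bullet> v) < 2 * c" using vv by (simp add: S_def pos_less_divide_eq)
      then have "s * (s * (v \<bullet> v)) < s * (2 * c)" using s by simp
      then have "s * (s * (v \<bullet> v)) < s * (2 * (- (v \<bullet> (z - x))))" by (simp add: c_def)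
      have ex: "((z - x) + s *\<^sub>R v) \<bullet> ((z - x) + s *\<^sub>R v) =
          (z - x) \<bullet> (z - x) + s * (2 * (v \<bullet> (z - x))) + s * (s * (v \<bullet> v))"
        by (rule sq_expand)
      have lt: "((z - x) + s *\<^sub>R v) \<bullet> ((z - x) + s *\<^sub>R v) < (z - x) \<bullet> (z - x)"
        unfolding ex using \<open>s * (s * (v \<bullet> v)) < s * (2 * (- (v \<bullet> (z - x))))\<close> by simp
      have "(norm ((z - x) + s *\<^sub>R v))^2 < (norm (z - x))^2"
        using lt by (simp add: power2_norm_eq_inner)
      then have "norm ((z - x) + s *\<^sub>R v) < norm (z - x)"
        by (rule power2_less_imp_less) simp
      then have "dist x (z + s *\<^sub>R v) < dist x z"
        by (simp add: dist_norm norm_minus_commute algebra_simps)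
      then show "z + s *\<^sub>R v \<in> \<Omega>" using bl by auto
    qed
    then show "v \<bullet> \<nu> z \<le> 0" using asym[OF normal z S0] by blast
  qed
  moreover have "norm (\<nu> z) = 1" using normal z unfolding outer_unit_normal_def by blast
  moreover have "z - x \<noteq> 0" using d by auto
  ultimately have "\<nu> z = (1 / norm (z - x)) *\<^sub>R (z - x)" by (intro polar)
  then show ?thesis by (simp add: dist_norm norm_minus_commute)
qed



lemma seg_v2:
  fixes v :: "'a::euclidean_space \<Rightarrow> real \<Rightarrow> real" and D :: "'a \<Rightarrow> real \<Rightarrow> 'a"
  assumes S: "0 < S" and inside: "\<forall>s. 0 < s \<and> s \<le> S \<longrightarrow> z + s *\<^sub>R u \<in> \<Omega>"
    and zc: "z \<in> closure \<Omega>"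
    and cont: "continuous_on (closure \<Omega> \<times> UNIV) (\<lambda>(x, t). v x t)"
    and deriv: "\<forall>x\<in>\<Omega>. \<forall>t. ((\<lambda>(y, s). v y s) has_derivative
                      (\<lambda>(h, k). D x t \<bullet> h + Dt x t * k)) (at (x, t))"
    and close: "\<forall>s. 0 < s \<and> s \<le> S \<longrightarrow> \<bar>D (z + s *\<^sub>R u) t \<bullet> u - D z t \<bullet> u\<bar> \<le> \<eta>"
  shows "\<bar>v (z + S *\<^sub>R u) t - v z t - S * (D z t \<bullet> u)\<bar> \<le> S * \<eta>"
proof -
  define f where "f \<sigma> = v (z + \<sigma> *\<^sub>R u) t - \<sigma> * (D z t \<bullet> u)" for \<sigma>
  have img: "(\<lambda>\<sigma>. (z + \<sigma> *\<^sub>R u, t)) ` {0..S} \<subseteq> closure \<Omega> \<times> UNIV"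
  proof
    fix p assume "p \<in> (\<lambda>\<sigma>. (z + \<sigma> *\<^sub>R u, t)) ` {0..S}"
    then obtain \<sigma> where \<sigma>: "\<sigma> \<in> {0..S}" and p: "p = (z + \<sigma> *\<^sub>R u, t)" by blast
    show "p \<in> closure \<Omega> \<times> UNIV"
    proof (cases "\<sigma> = 0")
      case True then show ?thesis using p zc by simp
    next
      case False then have "z + \<sigma> *\<^sub>R u \<in> \<Omega>" using inside \<sigma> by auto
      then show ?thesis using p closure_subset by auto
    qed
  qed
  have c1: "continuous_on {0..S} (\<lambda>\<sigma>. (z + \<sigma> *\<^sub>R u, t))"
    by (intro continuous_intros)
  have "continuous_on {0..S} (\<lambda>\<sigma>. (\<lambda>(x, t). v x t) (z + \<sigma> *\<^sub>R u, t))"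
    by (rule continuous_on_compose2[OF cont c1 img])
  then have fc: "continuous_on {0..S} f" unfolding f_def
    by (intro continuous_intros) simp
  have fd: "(f has_derivative (\<lambda>h. h * (D (z + \<sigma> *\<^sub>R u) t \<bullet> u - D z t \<bullet> u))) (at \<sigma>)"
    if "0 < \<sigma>" "\<sigma> < S" for \<sigma>
  proof -
    have xin: "z + \<sigma> *\<^sub>R u \<in> \<Omega>" using inside that by auto
    have l: "((\<lambda>\<sigma>. (z + \<sigma> *\<^sub>R u, t)) has_derivative (\<lambda>h. (h *\<^sub>R u, 0))) (at \<sigma>)"
      by (auto intro!: derivative_eq_intros)
    have g: "((\<lambda>(y, s). v y s) has_derivative (\<lambda>(h, k). D (z + \<sigma> *\<^sub>R u) t \<bullet> h + Dt (z + \<sigma> *\<^sub>R u) t * k))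
              (at (z + \<sigma> *\<^sub>R u, t))" using deriv xin by blast
    have "((\<lambda>\<sigma>. (\<lambda>(y, s). v y s) (z + \<sigma> *\<^sub>R u, t)) has_derivative
        (\<lambda>h. (\<lambda>(h, k). D (z + \<sigma> *\<^sub>R u) t \<bullet> h + Dt (z + \<sigma> *\<^sub>R u) t * k) (h *\<^sub>R u, 0))) (at \<sigma>)"
      by (rule has_derivative_compose[OF l g])
    then have "((\<lambda>\<sigma>. v (z + \<sigma> *\<^sub>R u) t) has_derivative (\<lambda>h. h * (D (z + \<sigma> *\<^sub>R u) t \<bullet> u))) (at \<sigma>)"
      by simp
    then have "((\<lambda>\<sigma>. v (z + \<sigma> *\<^sub>R u) t - \<sigma> * (D z t \<bullet> u)) has_derivative
         (\<lambda>h. h * (D (z + \<sigma> *\<^sub>R u) t \<bullet> u) - h * (D z t \<bullet> u))) (at \<sigma>)"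
      by (auto intro!: derivative_eq_intros)
    then show ?thesis unfolding f_def by (simp add: algebra_simps)
  qed
  obtain \<xi> where xi: "0 < \<xi>" "\<xi> < S"
    and eq: "f S - f 0 = (S - 0) * (D (z + \<xi> *\<^sub>R u) t \<bullet> u - D z t \<bullet> u)"
    using mvt[OF S fc fd] by (metis mult.commute)
  have "\<bar>D (z + \<xi> *\<^sub>R u) t \<bullet> u - D z t \<bullet> u\<bar> \<le> \<eta>" using close xi by auto
  then have "\<bar>f S - f 0\<bar> \<le> S * \<eta>" using eq S by (simp add: abs_mult mult_left_mono)
  then show ?thesis by (simp add: f_def)
qed

lemma seg_v1:
  fixes v :: "'a::euclidean_space \<Rightarrow> real \<Rightarrow> real"
  assumes S: "0 < S" and inside: "\<forall>s. 0 < s \<and> s \<le> S \<longrightarrow> z + s *\<^sub>R u \<in> \<Omega>" and nu: "norm u = 1"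
    and zc: "z \<in> closure \<Omega>"
    and cont: "continuous_on (closure \<Omega> \<times> UNIV) (\<lambda>(x, t). v x t)"
    and lip: "\<forall>p q. closed_segment p q \<subseteq> \<Omega> \<times> UNIV \<longrightarrow>
        \<bar>v (fst p) (snd p) - v (fst q) (snd q)\<bar> \<le> L * dist p q"
    and L0: "0 \<le> L"
  shows "v (z + S *\<^sub>R u) t \<le> v z t + L * S"
proof (rule field_le_epsilon)
  fix \<theta> :: real assume th: "0 < \<theta>"
  have zt: "(z, t) \<in> closure \<Omega> \<times> UNIV" using zc by simp
  obtain d where d: "d > 0" and Hd: "\<forall>p\<in>closure \<Omega> \<times> UNIV. dist p (z, t) < d \<longrightarrow>
      dist ((\<lambda>(x, t). v x t) p) ((\<lambda>(x, t). v x t) (z, t)) < \<theta>"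
    using cont zt th unfolding continuous_on_iff by blast
  define \<sigma> where "\<sigma> = min S (d / 2)"
  have s0: "0 < \<sigma>" using S d by (simp add: \<sigma>_def)
  have sS: "\<sigma> \<le> S" by (simp add: \<sigma>_def)
  have sd: "\<sigma> < d" using d by (simp add: \<sigma>_def)
  have pin: "z + \<sigma> *\<^sub>R u \<in> \<Omega>" using inside s0 sS by blast
  have dd: "dist (z + \<sigma> *\<^sub>R u, t) (z, t) < d" using sd s0 nu by (simp add: dist_Pair_Pair dist_norm)
  have P: "(z + \<sigma> *\<^sub>R u, t) \<in> closure \<Omega> \<times> UNIV" using pin closure_subset by auto
  have "dist ((\<lambda>(x, t). v x t) (z + \<sigma> *\<^sub>R u, t)) ((\<lambda>(x, t). v x t) (z, t)) < \<theta>"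
    using Hd P dd by blast
  then have c: "\<bar>v (z + \<sigma> *\<^sub>R u) t - v z t\<bar> < \<theta>" by (simp add: dist_real_def)
  have segsub: "closed_segment (z + \<sigma> *\<^sub>R u, t) (z + S *\<^sub>R u, t) \<subseteq> \<Omega> \<times> UNIV"
  proof
    fix p assume "p \<in> closed_segment (z + \<sigma> *\<^sub>R u, t) (z + S *\<^sub>R u, t)"
    then obtain a where a: "0 \<le> a" "a \<le> 1"
      and p: "p = (1 - a) *\<^sub>R (z + \<sigma> *\<^sub>R u, t) + a *\<^sub>R (z + S *\<^sub>R u, t)"
      unfolding in_segment by blast
    have "fst p = (1 - a) *\<^sub>R (z + \<sigma> *\<^sub>R u) + a *\<^sub>R (z + S *\<^sub>R u)" using p by simp
    also have "\<dots> = z + ((1 - a) * \<sigma> + a * S) *\<^sub>R u" by (simp add: algebra_simps)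
    finally have fp: "fst p = z + ((1 - a) * \<sigma> + a * S) *\<^sub>R u" .
    have "a * \<sigma> \<le> a * S" using sS a(1) by (rule mult_left_mono)
    then have "\<sigma> \<le> (1 - a) * \<sigma> + a * S" by (simp add: algebra_simps)
    moreover have "(1 - a) * \<sigma> \<le> (1 - a) * S" using sS a(2) by (intro mult_left_mono) auto
    then have "(1 - a) * \<sigma> + a * S \<le> S" by (simp add: algebra_simps)
    ultimately have "fst p \<in> \<Omega>" using fp inside s0 by auto
    then show "p \<in> \<Omega> \<times> UNIV" by (cases p) auto
  qed
  have "\<bar>v (z + \<sigma> *\<^sub>R u) t - v (z + S *\<^sub>R u) t\<bar> \<le> L * dist (z + \<sigma> *\<^sub>R u, t) (z + S *\<^sub>R u, t)"
    using lip segsub by fastforce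
  also have "dist (z + \<sigma> *\<^sub>R u, t) (z + S *\<^sub>R u, t) = S - \<sigma>"
  proof -
    have "dist (z + \<sigma> *\<^sub>R u, t) (z + S *\<^sub>R u, t) = norm ((\<sigma> - S) *\<^sub>R u)"
      by (simp add: dist_Pair_Pair dist_norm algebra_simps)
    also have "\<dots> = S - \<sigma>" using nu sS by simp
    finally show ?thesis .
  qed
  finally have "\<bar>v (z + \<sigma> *\<^sub>R u) t - v (z + S *\<^sub>R u) t\<bar> \<le> L * (S - \<sigma>)" .
  moreover have "L * (S - \<sigma>) \<le> L * S" using L0 s0 by (simp add: mult_left_mono)
  ultimately show "v (z + S *\<^sub>R u) t \<le> v z t + L * S + \<theta>" using c by linarith
qed



theorem mainTheorem13:
  fixes \<Omega> :: "'a::euclidean_space set"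
    and \<nu> :: "'a \<Rightarrow> 'a"
    and v1 v2 :: "'a \<Rightarrow> real \<Rightarrow> real"
    and Dv2 :: "'a \<Rightarrow> real \<Rightarrow> 'a"
    and Dtv2 :: "'a \<Rightarrow> real \<Rightarrow> real"
  assumes dom: "unif_smooth_domain \<Omega>"
    and normal: "outer_unit_normal \<Omega> \<nu>"
    and v1_W1inf: "W1inf v1 \<Omega>"
    and v1_cont: "continuous_on (closure \<Omega> \<times> UNIV) (\<lambda>(x, t). v1 x t)"
    and v2_deriv: "\<forall>x\<in>\<Omega>. \<forall>t. ((\<lambda>(y, s). v2 y s) has_derivative
                      (\<lambda>(h, k). Dv2 x t \<bullet> h + Dtv2 x t * k)) (at (x, t))"
    and v2_cont: "continuous_on (closure \<Omega> \<times> UNIV) (\<lambda>(x, t). v2 x t)"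
    and Dv2_cont: "continuous_on (closure \<Omega> \<times> UNIV) (\<lambda>(x, t). Dv2 x t)"
    and Dtv2_cont: "continuous_on (closure \<Omega> \<times> UNIV) (\<lambda>(x, t). Dtv2 x t)"
    and bdry_le: "\<forall>z\<in>frontier \<Omega>. \<forall>t. v1 z t \<le> v2 z t"
    and Dv2_unif: "uniformly_continuous_on (closure \<Omega> \<times> UNIV) (\<lambda>(x, t). Dv2 x t)"
    and sup_neg: "\<exists>\<delta>>0. \<forall>z\<in>frontier \<Omega>. \<forall>t.
                    v1 z t - v2 z t + min (\<nu> z \<bullet> Dv2 z t) 0 \<le> - \<delta>"
    and inf_pos: "\<forall>\<epsilon>>0. \<exists>c>0. \<forall>x t. cball x \<epsilon> \<subseteq> \<Omega> \<longrightarrow> c \<le> v2 x t"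
  shows "\<exists>k>0. \<forall>x\<in>\<Omega>. \<forall>t. v1 x t \<le> k * v2 x t"
proof -
  have opn: "open \<Omega>" using dom unfolding unif_smooth_domain_def by blast
  obtain B where B: "\<forall>x\<in>\<Omega>. \<forall>t. \<bar>v1 x t\<bar> \<le> B" using v1_W1inf unfolding W1inf_def by blast
  obtain L where L: "\<forall>p q. closed_segment p q \<subseteq> \<Omega> \<times> UNIV \<longrightarrow>
        \<bar>v1 (fst p) (snd p) - v1 (fst q) (snd q)\<bar> \<le> L * dist p q"
    using v1_W1inf unfolding W1inf_def by blast
  define L1 where "L1 = \<bar>L\<bar>"
  have L10: "0 \<le> L1" by (simp add: L1_def)
  have lip: "\<forall>p q. closed_segment p q \<subseteq> \<Omega> \<times> UNIV \<longrightarrow>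
        \<bar>v1 (fst p) (snd p) - v1 (fst q) (snd q)\<bar> \<le> L1 * dist p q"
  proof (intro allI impI)
    fix p q :: "'a \<times> real" assume "closed_segment p q \<subseteq> \<Omega> \<times> UNIV"
    then have "\<bar>v1 (fst p) (snd p) - v1 (fst q) (snd q)\<bar> \<le> L * dist p q" using L by blast
    also have "\<dots> \<le> L1 * dist p q" unfolding L1_def by (intro mult_right_mono) auto
    finally show "\<bar>v1 (fst p) (snd p) - v1 (fst q) (snd q)\<bar> \<le> L1 * dist p q" .
  qed
  define B1 where "B1 = \<bar>B\<bar>"
  have B10: "0 \<le> B1" by (simp add: B1_def)
  have B1: "\<forall>x\<in>\<Omega>. \<forall>t. v1 x t \<le> B1" using B unfolding B1_def by (meson abs_le_D1 abs_ge_self order_trans)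
  obtain \<delta> where d0: "\<delta> > 0" and sn: "\<forall>z\<in>frontier \<Omega>. \<forall>t.
                    v1 z t - v2 z t + min (\<nu> z \<bullet> Dv2 z t) 0 \<le> - \<delta>" using sup_neg by blast
  obtain R where R0: "R > 0" and inw: "\<forall>z\<in>frontier \<Omega>. \<forall>s. 0 < s \<and> s \<le> R \<longrightarrow> z - s *\<^sub>R \<nu> z \<in> \<Omega>"
    using inward_normal[OF dom normal] by blast
  define \<eta> where "\<eta> = \<delta> / 8"
  have eta0: "0 < \<eta>" using d0 by (simp add: \<eta>_def)
  obtain \<rho> where rho0: "\<rho> > 0" and UC: "\<forall>p\<in>closure \<Omega> \<times> UNIV. \<forall>q\<in>closure \<Omega> \<times> UNIV.
       dist q p < \<rho> \<longrightarrow> dist ((\<lambda>(x, t). Dv2 x t) q) ((\<lambda>(x, t). Dv2 x t) p) < \<eta>"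
    using Dv2_unif eta0 unfolding uniformly_continuous_on_def by blast
  define s1 where "s1 = min (min R (\<rho> / 2)) (1 / 4)"
  have s10: "0 < s1" using R0 rho0 by (simp add: s1_def)
  have s1R: "s1 \<le> R" and s1rho: "s1 < \<rho>" and s14: "s1 \<le> 1 / 4" using rho0 by (auto simp: s1_def)
  define \<epsilon> where "\<epsilon> = min (s1 / 2) (\<delta> / (4 * (L1 + 1)))"
  have L1p: "0 < L1 + 1" using L10 by linarith
  have "0 < \<delta> / (4 * (L1 + 1))" using d0 L1p by simp
  then have eps0: "0 < \<epsilon>" using s10 by (simp add: \<epsilon>_def)
  have eps_s1: "2 * \<epsilon> \<le> s1" by (simp add: \<epsilon>_def)
  have epsL: "\<epsilon> * (4 * (L1 + 1)) \<le> \<delta>"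
  proof -
    have "\<epsilon> \<le> \<delta> / (4 * (L1 + 1))" by (simp add: \<epsilon>_def)
    then show ?thesis using L1p by (simp add: pos_le_divide_eq)
  qed
  obtain c where c0: "c > 0" and cv: "\<forall>x t. cball x \<epsilon> \<subseteq> \<Omega> \<longrightarrow> c \<le> v2 x t"
    using inf_pos eps0 by blast
  have v2pos: "0 < v2 x t" if xO: "x \<in> \<Omega>" for x t
  proof -
    have "\<forall>x\<in>\<Omega>. \<exists>e>0. cball x e \<subseteq> \<Omega>" using opn by (simp only: open_contains_cball)
    then obtain e where e0: "e > 0" and ec: "cball x e \<subseteq> \<Omega>" using xO by metis
    obtain c' where c'0: "c' > 0" and c'v: "\<forall>x t. cball x e \<subseteq> \<Omega> \<longrightarrow> c' \<le> v2 x t" using inf_pos e0 by metis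
    have "c' \<le> v2 x t" using c'v ec by metis
    then show ?thesis using c'0 by linarith
  qed
  have v2nn: "0 \<le> v2 z t" if "z \<in> closure \<Omega>" for z t
  proof -
    have c1: "continuous_on (closure \<Omega>) (\<lambda>x. (x, t))" by (intro continuous_intros)
    have im: "(\<lambda>x. (x, t)) ` closure \<Omega> \<subseteq> closure \<Omega> \<times> UNIV" by auto
    have "continuous_on (closure \<Omega>) (\<lambda>x. (\<lambda>(x, t). v2 x t) (x, t))"
      by (rule continuous_on_compose2[OF v2_cont c1 im])
    then have "continuous_on (closure \<Omega>) (\<lambda>x. v2 x t)" by simp
    then show ?thesis
      by (rule continuous_ge_on_closure[OF _ that]) (use v2pos in \<open>auto intro: less_imp_le\<close>)
  qed
  define k where "k = max 1 (max (4 * L1 / \<delta>) (max (16 * B1 / \<delta>) (B1 / c)))"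
  have k1: "1 \<le> k" by (simp add: k_def)
  have k0: "0 < k" using k1 by linarith
  have kL: "4 * L1 \<le> k * \<delta>"
  proof -
    have "4 * L1 / \<delta> \<le> k" by (simp add: k_def)
    then show ?thesis using d0 by (simp add: divide_le_eq mult.commute)
  qed
  have kB: "16 * B1 \<le> k * \<delta>"
  proof -
    have "16 * B1 / \<delta> \<le> k" by (simp add: k_def)
    then show ?thesis using d0 by (simp add: divide_le_eq mult.commute)
  qed
  have kc: "B1 \<le> k * c"
  proof -
    have "B1 / c \<le> k" by (simp add: k_def)
    then show ?thesis using c0 by (simp add: divide_le_eq mult.commute)
  qed
  have main: "v1 x t \<le> k * v2 x t" if x: "x \<in> \<Omega>" for x t
  proof (cases "cball x \<epsilon> \<subseteq> \<Omega>")
    case True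
    then have "c \<le> v2 x t" using cv by blast
    then have "k * c \<le> k * v2 x t" using k0 by simp
    moreover have "v1 x t \<le> B1" using B1 x by blast
    ultimately show ?thesis using kc by linarith
  next
    case False
    then obtain y where y: "y \<in> cball x \<epsilon>" "y \<notin> \<Omega>" by blast
    have cl: "closed (- \<Omega>)" using opn by (simp add: closed_Compl)
    have ne: "- \<Omega> \<noteq> {}" using y by blast
    obtain z where zc: "z \<in> - \<Omega>" and zmin: "\<And>w. w \<in> - \<Omega> \<Longrightarrow> dist x z \<le> dist x w"
      using distance_attains_inf[OF cl ne, of x] by blast
    define d where "d = dist x z"
    have dle: "d \<le> \<epsilon>" using zmin[of y] y by (simp add: d_def)
    have dpos: "0 < d" using zc x by (auto simp: d_def)
    have bl: "ball x d \<subseteq> \<Omega>"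
    proof
      fix w assume "w \<in> ball x d"
      then have "dist x w < d" by simp
      then show "w \<in> \<Omega>" using zmin[of w] unfolding d_def by force
    qed
    have zcl: "z \<in> closure \<Omega>"
    proof -
      have "z \<in> cball x d" by (simp add: d_def)
      also have "cball x d = closure (ball x d)" using dpos by simp
      also have "\<dots> \<subseteq> closure \<Omega>" using bl by (rule closure_mono)
      finally show ?thesis .
    qed
    have zf: "z \<in> frontier \<Omega>" using zcl zc opn by (simp add: frontier_def interior_open)
    define u where "u = (1 / d) *\<^sub>R (x - z)"
    have nn: "\<nu> z = (1 / dist x z) *\<^sub>R (z - x)"
      by (rule nearest_normal[OF normal zf _ bl[unfolded d_def]]) (use dpos in \<open>simp add: d_def\<close>)
    have nuz: "\<nu> z = - u" unfolding nn u_def d_def by (simp add: scaleR_diff_right)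
    have xz: "x - z = d *\<^sub>R u" using dpos by (simp add: u_def)
    have nu1: "norm u = 1" using dpos by (simp add: u_def d_def dist_norm)
    have xeq: "z + d *\<^sub>R u = x" using xz by (simp add: algebra_simps)
    have in1: "\<forall>s. 0 < s \<and> s \<le> d \<longrightarrow> z + s *\<^sub>R u \<in> \<Omega>"
    proof (intro allI impI)
      fix s assume s: "0 < s \<and> s \<le> d"
      have "x - (z + s *\<^sub>R u) = (d - s) *\<^sub>R u" using xz by (simp add: algebra_simps)
      then have "dist x (z + s *\<^sub>R u) = d - s" using nu1 s by (simp add: dist_norm)
      then have "z + s *\<^sub>R u \<in> ball x d" using s by simp
      then show "z + s *\<^sub>R u \<in> \<Omega>" using bl by blast
    qed
    have in2: "\<forall>s. 0 < s \<and> s \<le> s1 \<longrightarrow> z + s *\<^sub>R u \<in> \<Omega>"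
    proof (intro allI impI)
      fix s assume s: "0 < s \<and> s \<le> s1"
      then have "z - s *\<^sub>R \<nu> z \<in> \<Omega>" using inw zf s1R by auto
      then show "z + s *\<^sub>R u \<in> \<Omega>" using nuz by simp
    qed
    have ds1: "2 * d \<le> s1" using dle eps_s1 by linarith
    have close: "\<forall>s. 0 < s \<and> s \<le> s1 \<longrightarrow> \<bar>Dv2 (z + s *\<^sub>R u) t \<bullet> u - Dv2 z t \<bullet> u\<bar> \<le> \<eta>"
    proof (intro allI impI)
      fix s assume s: "0 < s \<and> s \<le> s1"
      have P: "(z + s *\<^sub>R u, t) \<in> closure \<Omega> \<times> UNIV" using in2 s closure_subset by blast
      have Q: "(z, t) \<in> closure \<Omega> \<times> UNIV" using zcl by simp
      have "dist (z + s *\<^sub>R u, t) (z, t) = s" using nu1 s by (simp add: dist_Pair_Pair dist_norm)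
      then have "dist (z + s *\<^sub>R u, t) (z, t) < \<rho>" using s s1rho by linarith
      then have "dist (Dv2 (z + s *\<^sub>R u) t) (Dv2 z t) < \<eta>" using UC P Q by fastforce
      then have n: "norm (Dv2 (z + s *\<^sub>R u) t - Dv2 z t) < \<eta>" by (simp add: dist_norm)
      have "\<bar>Dv2 (z + s *\<^sub>R u) t \<bullet> u - Dv2 z t \<bullet> u\<bar> = \<bar>(Dv2 (z + s *\<^sub>R u) t - Dv2 z t) \<bullet> u\<bar>"
        by (simp add: inner_diff_left)
      also have "\<dots> \<le> norm (Dv2 (z + s *\<^sub>R u) t - Dv2 z t) * norm u" by (rule Cauchy_Schwarz_ineq2)
      finally show "\<bar>Dv2 (z + s *\<^sub>R u) t \<bullet> u - Dv2 z t \<bullet> u\<bar> \<le> \<eta>" using n nu1 by simp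
    qed
    have close_d: "\<forall>s. 0 < s \<and> s \<le> d \<longrightarrow> \<bar>Dv2 (z + s *\<^sub>R u) t \<bullet> u - Dv2 z t \<bullet> u\<bar> \<le> \<eta>"
      using close ds1 dpos by auto
    define b where "b = Dv2 z t \<bullet> u"
    have S1: "\<bar>v2 x t - v2 z t - d * b\<bar> \<le> d * \<eta>"
      using seg_v2[OF dpos in1 zcl v2_cont v2_deriv close_d] xeq by (simp add: b_def)
    have S2: "\<bar>v2 (z + s1 *\<^sub>R u) t - v2 z t - s1 * b\<bar> \<le> s1 * \<eta>"
      using seg_v2[OF s10 in2 zcl v2_cont v2_deriv close] by (simp add: b_def)
    have pos2: "0 < v2 (z + s1 *\<^sub>R u) t" using in2 s10 v2pos by blast
    have V1: "v1 x t \<le> v1 z t + L1 * d"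
      using seg_v1[OF dpos in1 nu1 zcl v1_cont lip L10, of t] xeq by simp
    have bz: "v1 z t \<le> v2 z t" using bdry_le zf by blast
    have nb: "\<nu> z \<bullet> Dv2 z t = - b" unfolding nuz b_def by (simp add: inner_commute[of u])
    have snz: "v1 z t - v2 z t + min (- b) 0 \<le> - \<delta>"
      using sn[rule_format, OF zf, of t] unfolding nb .
    have v2z: "0 \<le> v2 z t" using v2nn zcl by blast
    have v2x: "0 < v2 x t" using v2pos x by blast
    have Ld: "L1 * d \<le> \<delta> / 4"
    proof -
      have "L1 * d \<le> (L1 + 1) * \<epsilon>" using dle dpos L10 by (intro mult_mono) auto
      then show ?thesis using epsL by (simp add: algebra_simps)
    qed
    have deta: "d * \<eta> \<le> \<eta> / 4"
    proof -
      have "d \<le> 1 / 4" using ds1 s14 dpos by linarith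
      then have "d * \<eta> \<le> (1 / 4) * \<eta>" using eta0 by (intro mult_right_mono) auto
      then show ?thesis by simp
    qed
    have s1eta: "s1 * \<eta> \<le> \<eta> / 4"
    proof -
      have "s1 * \<eta> \<le> (1 / 4) * \<eta>" using s14 eta0 by (intro mult_right_mono) auto
      then show ?thesis by simp
    qed
    show ?thesis
    proof (cases "\<delta> / 2 \<le> b")
      case True
      have "d * (3 * \<delta> / 8) \<le> d * (b - \<eta>)" using True dpos
        by (intro mult_left_mono) (auto simp: \<eta>_def)
      then have D1: "d * (3 * \<delta> / 8) \<le> d * b - d * \<eta>" by (simp add: algebra_simps)
      have lowx: "v2 z t + d * (3 * \<delta> / 8) \<le> v2 x t" using S1 D1 by linarith
      have "k * (v2 z t + d * (3 * \<delta> / 8)) \<le> k * v2 x t" using lowx k0 by simp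
      moreover have "v2 z t \<le> k * v2 z t" using k1 v2z by (simp add: mult_le_cancel_right1)
      moreover have "L1 * d \<le> k * (d * (3 * \<delta> / 8))"
      proof -
        have "L1 * d \<le> (k * \<delta> / 4) * d" using kL dpos by (intro mult_right_mono) auto
        also have "\<dots> \<le> (k * \<delta> * 3 / 8) * d" using k0 d0 dpos by (intro mult_right_mono) auto
        finally show ?thesis by (simp add: algebra_simps)
      qed
      ultimately show ?thesis using V1 bz by (simp add: algebra_simps)
    next
      case False
      then have "min (- b) 0 > - \<delta> / 2" using d0 by simp
      then have vz: "v1 z t - v2 z t < - \<delta> / 2" using snz by linarith
      show ?thesis
      proof (cases "v1 x t \<le> 0")
        case True
        then show ?thesis using v2x k0 by (smt (verit) mult_pos_pos)
      next
        case False
        then have v2zb: "\<delta> / 4 < v2 z t" using V1 vz Ld by linarith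
        have lb2: "- v2 z t - s1 * \<eta> \<le> 2 * (d * b)"
        proof (cases "b < 0")
          case True
          have "s1 * b \<le> (2 * d) * b" using ds1 True by (intro mult_right_mono_neg) auto
          moreover have "- v2 z t - s1 * \<eta> \<le> s1 * b" using S2 pos2 by linarith
          ultimately show ?thesis by simp
        next
          case False
          then have "0 \<le> d * b" using dpos by simp
          moreover have "0 \<le> s1 * \<eta>" using s10 eta0 by simp
          ultimately show ?thesis using v2z by linarith
        qed
        have "v2 z t + d * b - d * \<eta> \<le> v2 x t" using S1 by linarith
        then have "\<delta> / 16 \<le> v2 x t" using lb2 v2zb deta s1eta \<eta>_def d0 by linarith
        then have "k * (\<delta> / 16) \<le> k * v2 x t" using k0 by simp
        moreover have "v1 x t \<le> B1" using B1 x by blast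
        ultimately show ?thesis using kB by simp
      qed
    qed
  qed
  show ?thesis using k0 main by blast
qed


end
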